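(* Let $p$ be any prime, $G=SL(2,\mathbb{Z}_p)$ and $T=\{F\in SL(2,\mathbb{Z}_p):\mathrm{Tr}(F)\neq 2\pmod p\}$. Then the clique number of the Cayley graph $\Gamma(G,T)$ satisfies $\omega(\Gamma(G,T))\geq p(p-1)$.
   Context: The Cayley graph $\Gamma(G,T)$ has vertex set $G$ and an edge between $g_1,g_2$ iff $g_1^{-1}g_2\in T$; thus $F_1,F_2$ are adjacent iff $\mathrm{Tr}(F_1^{-1}F_2)\neq 2 \pmod p$. The clique number $\omega$ is the largest size of a set of pairwise adjacent vertices. *)

theory Defs
  imports "HOL-Computational_Algebra.Primes"
begin

text \<open>2x2 matrices over Z_p, represented as tuples (a,b,c,d) of integers
  with entries in {0..p-1}, standing for the matrix [[a,b],[c,d]].\<close>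

type_synonym mat2 = "int \<times> int \<times> int \<times> int"

definition SL2 :: "int \<Rightarrow> mat2 set" where
  "SL2 p = {(a,b,c,d). a \<in> {0..p-1} \<and> b \<in> {0..p-1} \<and> c \<in> {0..p-1} \<and> d \<in> {0..p-1}
                        \<and> (a*d - b*c) mod p = 1 mod p}"

definition mmul :: "int \<Rightarrow> mat2 \<Rightarrow> mat2 \<Rightarrow> mat2" where
  "mmul p X Y = (case X of (a,b,c,d) \<Rightarrow> case Y of (e,f,g,h) \<Rightarrow>
     ((a*e + b*g) mod p, (a*f + b*h) mod p, (c*e + d*g) mod p, (c*f + d*h) mod p))"

text \<open>Inverse of a determinant-1 matrix: adjugate.\<close>
definition minv :: "int \<Rightarrow> mat2 \<Rightarrow> mat2" where
  "minv p X = (case X of (a,b,c,d) \<Rightarrow> (d mod p, (- b) mod p, (- c) mod p, a mod p))"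

definition mtr :: "mat2 \<Rightarrow> int" where
  "mtr X = (case X of (a,b,c,d) \<Rightarrow> a + d)"

definition Tset :: "int \<Rightarrow> mat2 set" where
  "Tset p = {F \<in> SL2 p. mtr F mod p \<noteq> 2 mod p}"

definition cay_adj :: "int \<Rightarrow> mat2 \<Rightarrow> mat2 \<Rightarrow> bool" where
  "cay_adj p g1 g2 \<longleftrightarrow> mmul p (minv p g1) g2 \<in> Tset p"

definition is_clique :: "int \<Rightarrow> mat2 set \<Rightarrow> bool" where
  "is_clique p S \<longleftrightarrow> S \<subseteq> SL2 p \<and> (\<forall>x\<in>S. \<forall>y\<in>S. x \<noteq> y \<longrightarrow> cay_adj p x y)"

definition clique_number :: "int \<Rightarrow> nat" where
  "clique_number p = Max (card ` {S. is_clique p S})"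

end

theory Submission imports Defs "HOL-Number_Theory.Number_Theory" begin

lemma inv_ex:
  fixes p a :: int
  assumes "prime p" "\<not> p dvd a"
  shows "\<exists>a'. p dvd (a*a' - 1)"
proof -
  have "coprime a p" using prime_imp_coprime[OF assms] by (simp add: coprime_commute)
  then obtain x where "[a*x = 1] (mod p)" using cong_solve_coprime_int by blast
  then show ?thesis by (metis cong_iff_dvd_diff cong_sym)
qed

lemma nonsq_ex:
  fixes p :: int
  assumes "prime p" "p \<noteq> 2"
  shows "\<exists>n. \<forall>x. \<not> p dvd (x^2 - n)"
proof -
  have "p \<ge> 2" using prime_ge_2_int[OF assms(1)] .
  then have p2: "p > 2" using assms(2) by linarith
  define A where "A = {0..p-1}"
  define f where "f = (\<lambda>x::int. x^2 mod p)"
  have fin: "finite A" by (simp add: A_def)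
  have sub: "f ` A \<subseteq> A"
  proof
    fix y assume "y \<in> f ` A"
    then obtain x where "y = x^2 mod p" unfolding f_def by blast
    moreover have "0 \<le> x^2 mod p" "x^2 mod p < p" using p2 by simp_all
    ultimately show "y \<in> A" unfolding A_def by simp
  qed
  have "(p-1)^2 = 1 + p*(p-2)" by (simp add: power2_eq_square algebra_simps)
  then have "f (p-1) = 1 mod p" unfolding f_def by simp
  then have eqf: "f 1 = f (p-1)" unfolding f_def by simp
  have inA: "1 \<in> A" "p - 1 \<in> A" and ne: "1 \<noteq> p - 1" using p2 by (auto simp: A_def)
  have "\<not> inj_on f A"
  proof
    assume "inj_on f A"
    then have "1 = p - 1" using eqf inA by (rule inj_onD)
    then show False using ne by simp
  qed
  then have "\<not> A \<subseteq> f ` A" using finite_surj_inj[OF fin] by blast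
  then obtain n where n: "n \<in> A" "n \<notin> f ` A" by blast
  have "\<not> p dvd (x^2 - n)" for x
  proof
    assume "p dvd (x^2 - n)"
    then have "x^2 mod p = n mod p" by (simp add: mod_eq_dvd_iff)
    also have "n mod p = n" using n(1) p2 by (auto simp: A_def)
    finally have "f (x mod p) = n" unfolding f_def by (simp add: power_mod)
    moreover have "x mod p \<in> A" using p2 by (auto simp: A_def)
    ultimately show False using n(2) by blast
  qed
  then show ?thesis by blast
qed


lemma G1: "((x::int) mod p * (y mod p) - z mod p * (w mod p)) mod p = (x*y - z*w) mod p"
proof -
  have "(x mod p * (y mod p) - z mod p * (w mod p)) mod p = ((x mod p * (y mod p)) mod p - (z mod p * (w mod p)) mod p) mod p" by (rule mod_diff_eq[symmetric])
  also have "\<dots> = ((x*y) mod p - (z*w) mod p) mod p" by (simp only: mod_mult_eq)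
  also have "\<dots> = (x*y - z*w) mod p" by (rule mod_diff_eq)
  finally show ?thesis .
qed
lemma G2: "((x::int) + y - z) mod p = (x mod p + y mod p - z mod p) mod p"
proof -
  have "(x mod p + y mod p - z mod p) mod p = ((x mod p + y mod p) mod p - z mod p) mod p" by (simp only: mod_diff_left_eq)
  also have "\<dots> = ((x + y) mod p - z mod p) mod p" by (simp only: mod_add_eq)
  also have "\<dots> = (x + y - z) mod p" by (rule mod_diff_eq)
  finally show ?thesis by simp
qed
lemma G4: "((y mod p) * (x::int) + (w mod p) * z) mod p = (y*x + w*z) mod p"
proof -
  have "((y mod p) * x + (w mod p) * z) mod p = (((y mod p) * x) mod p + ((w mod p) * z) mod p) mod p" by (rule mod_add_eq[symmetric])
  also have "\<dots> = ((y * x) mod p + (w * z) mod p) mod p" by (simp only: mod_mult_left_eq)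
  also have "\<dots> = (y*x + w*z) mod p" by (rule mod_add_eq)
  finally show ?thesis .
qed

lemma adj_crit:
  fixes p a b c d e f g h :: int
  assumes p: "p > 0" and X: "(a,b,c,d) \<in> SL2 p" and Y: "(e,f,g,h) \<in> SL2 p"
    and nd: "\<not> p dvd ((a-e)*(d-h) - (b-f)*(c-g))"
  shows "cay_adj p (a,b,c,d) (e,f,g,h)"
proof -
  have dX: "(a*d - b*c) mod p = 1 mod p" and dY: "(e*h - f*g) mod p = 1 mod p"
    using X Y by (auto simp: SL2_def)
  have M: "mmul p (minv p (a,b,c,d)) (e,f,g,h) =
     ((d*e - b*g) mod p, (d*f - b*h) mod p, (a*g - c*e) mod p, (a*h - c*f) mod p)"
  proof -
    have e1: "(d mod p * e + - b mod p * g) mod p = (d*e - b*g) mod p"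
      by (simp only: G4) (simp add: algebra_simps)
    have e2: "(d mod p * f + - b mod p * h) mod p = (d*f - b*h) mod p"
      by (simp only: G4) (simp add: algebra_simps)
    have e3: "(- c mod p * e + a mod p * g) mod p = (a*g - c*e) mod p"
      by (simp only: G4) (simp add: algebra_simps)
    have e4: "(- c mod p * f + a mod p * h) mod p = (a*h - c*f) mod p"
      by (simp only: G4) (simp add: algebra_simps)
    show ?thesis unfolding mmul_def minv_def prod.case e1 e2 e3 e4 by (rule refl)
  qed
  have iden: "(d*e - b*g) * (a*h - c*f) - (d*f - b*h) * (a*g - c*e) = (a*d - b*c)*(e*h - f*g)"
    by (simp add: algebra_simps)
  have det: "(((d*e - b*g) mod p) * ((a*h - c*f) mod p) - ((d*f - b*h) mod p) * ((a*g - c*e) mod p)) mod p = 1 mod p"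
  proof -
    have "(((d*e - b*g) mod p) * ((a*h - c*f) mod p) - ((d*f - b*h) mod p) * ((a*g - c*e) mod p)) mod p
        = ((a*d - b*c)*(e*h - f*g)) mod p"
      by (simp only: G1 iden)
    also have "\<dots> = (((a*d - b*c) mod p)*((e*h - f*g) mod p)) mod p" by (simp only: mod_mult_eq)
    also have "\<dots> = ((1 mod p)*(1 mod p)) mod p" by (simp only: dX dY)
    also have "\<dots> = 1 mod p" by (simp only: mod_mult_eq mult_1_left)
    finally show ?thesis .
  qed
  have tr: "((d*e - b*g) mod p + (a*h - c*f) mod p) mod p \<noteq> 2 mod p"
  proof
    assume H0: "((d*e - b*g) mod p + (a*h - c*f) mod p) mod p = 2 mod p"
    have H: "((d*e - b*g) + (a*h - c*f)) mod p = 2 mod p" using H0 by (simp only: mod_add_eq)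
    have eq: "(a-e)*(d-h) - (b-f)*(c-g) = (a*d - b*c) + (e*h - f*g) - ((d*e - b*g) + (a*h - c*f))"
      by (simp add: algebra_simps)
    have "((a-e)*(d-h) - (b-f)*(c-g)) mod p = (((a*d - b*c) mod p) + ((e*h - f*g) mod p) - (((d*e - b*g) + (a*h - c*f)) mod p)) mod p"
      unfolding eq by (rule G2)
    also have "\<dots> = (1 mod p + 1 mod p - 2 mod p) mod p" by (simp only: dX dY H)
    also have "\<dots> = (1 + 1 - 2) mod p" by (rule G2[symmetric])
    finally show False using nd by (simp add: mod_eq_0_iff_dvd)
  qed
  have r: "\<And>x. x mod p \<in> {0..p-1}" using p by simp
  show ?thesis unfolding cay_adj_def M Tset_def SL2_def mtr_def
    using det tr r by simp
qed


lemma range_eq: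
  fixes p x y :: int
  assumes "x \<in> {0..p-1}" "y \<in> {0..p-1}" "p dvd (x - y)"
  shows "x = y"
proof -
  have "x mod p = y mod p" using assms(3) by (simp add: mod_eq_dvd_iff)
  moreover have "x mod p = x" "y mod p = y" using assms(1,2) by auto
  ultimately show ?thesis by simp
qed

lemma key_iden:
  fixes a b c d e f g h n :: int
  shows "a*e*((a-e)*(d-h) - (b-f)*(c-g)) + (a-e)^2 - n*(a*f-b*e)^2 =
   (a-e)*e*(a*d-b*c-1) - (a-e)*a*(e*h-f*g-1) + ((a-e)*e*b - a*e*(b-f))*(c+n*b)
    + (a*e*(b-f) - (a-e)*a*f)*(g+n*f)"
  by (simp add: algebra_simps power2_eq_square)


definition Sset :: "int \<Rightarrow> int \<Rightarrow> mat2 set" where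
  "Sset p n = {(a,b,c,d). (a,b,c,d) \<in> SL2 p \<and> a \<noteq> 0 \<and> c = (-n*b) mod p}"

lemma SL2_dvd: "(a,b,c,d) \<in> SL2 p \<longleftrightarrow> a \<in> {0..p-1} \<and> b \<in> {0..p-1} \<and> c \<in> {0..p-1} \<and> d \<in> {0..p-1}
   \<and> p dvd (a*d - b*c - 1)"
  by (simp add: SL2_def mod_eq_dvd_iff)

lemma S_eq:
  fixes p n :: int
  assumes p: "prime p" and X: "(a,b,c,d) \<in> Sset p n" and Y: "(e,f,g,h) \<in> Sset p n"
    and ab: "a = e" "b = f"
  shows "(a,b,c,d) = (e,f,g,h)"
proof -
  have cg: "c = g" using X Y ab by (simp add: Sset_def)
  have X1: "p dvd (a*d - b*c - 1)" "a \<noteq> 0" "a \<in> {0..p-1}" "d \<in> {0..p-1}"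
    using X by (auto simp: Sset_def SL2_dvd)
  have Y1: "p dvd (e*h - f*g - 1)" "h \<in> {0..p-1}" using Y by (auto simp: Sset_def SL2_dvd)
  have "p dvd ((a*d - b*c - 1) - (e*h - f*g - 1))" by (rule dvd_diff[OF X1(1) Y1(1)])
  also have "(a*d - b*c - 1) - (e*h - f*g - 1) = a*(d-h)" using ab cg by (simp add: algebra_simps)
  finally have "p dvd a*(d-h)" .
  moreover have "\<not> p dvd a"
  proof
    assume "p dvd a" then have "a = 0" using range_eq[of a p 0] X1 prime_gt_0_int[OF p] by auto
    then show False using X1 by simp
  qed
  ultimately have "p dvd (d - h)" using p prime_dvd_mult_iff by blast
  then have "d = h" using range_eq X1 Y1 by blast
  then show ?thesis using ab cg by simp
qed

lemma S_adj:
  fixes p n :: int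
  assumes p: "prime p" and nsq: "\<forall>x. \<not> p dvd (x^2 - n)"
    and X: "(a,b,c,d) \<in> Sset p n" and Y: "(e,f,g,h) \<in> Sset p n"
    and ne: "(a,b,c,d) \<noteq> (e,f,g,h)"
  shows "\<not> p dvd ((a-e)*(d-h) - (b-f)*(c-g))"
proof
  assume D: "p dvd ((a-e)*(d-h) - (b-f)*(c-g))"
  have p0: "p > 0" using prime_gt_0_int[OF p] .
  have X1: "p dvd (a*d - b*c - 1)" "a \<noteq> 0" "a \<in> {0..p-1}" "b \<in> {0..p-1}" "c = (-n*b) mod p"
    using X by (auto simp: Sset_def SL2_dvd)
  have Y1: "p dvd (e*h - f*g - 1)" "e \<noteq> 0" "e \<in> {0..p-1}" "f \<in> {0..p-1}" "g = (-n*f) mod p"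
    using Y by (auto simp: Sset_def SL2_dvd)
  have c1: "p dvd (c + n*b)"
  proof -
    have "(c + n*b) mod p = ((-n*b) mod p + n*b) mod p" using X1 by simp
    also have "\<dots> = (-n*b + n*b) mod p" by (simp add: mod_simps)
    finally show ?thesis by (simp add: dvd_eq_mod_eq_0)
  qed
  have g1: "p dvd (g + n*f)"
  proof -
    have "(g + n*f) mod p = ((-n*f) mod p + n*f) mod p" using Y1 by simp
    also have "\<dots> = (-n*f + n*f) mod p" by (simp add: mod_simps)
    finally show ?thesis by (simp add: dvd_eq_mod_eq_0)
  qed
  have na: "\<not> p dvd a"
  proof
    assume "p dvd a" then have "a = 0" using range_eq[of a p 0] X1 p0 by auto
    then show False using X1 by simp
  qed
  have R: "p dvd (a*e*((a-e)*(d-h) - (b-f)*(c-g)) + (a-e)^2 - n*(a*f-b*e)^2)"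
  proof -
    have t1: "p dvd (a-e)*e*(a*d-b*c-1)" using X1(1) by (rule dvd_mult)
    have t2: "p dvd (a-e)*a*(e*h-f*g-1)" using Y1(1) by (rule dvd_mult)
    have t3: "p dvd ((a-e)*e*b - a*e*(b-f))*(c+n*b)" using c1 by (rule dvd_mult)
    have t4: "p dvd (a*e*(b-f) - (a-e)*a*f)*(g+n*f)" using g1 by (rule dvd_mult)
    have "p dvd (a-e)*e*(a*d-b*c-1) - (a-e)*a*(e*h-f*g-1) + ((a-e)*e*b - a*e*(b-f))*(c+n*b)
    + (a*e*(b-f) - (a-e)*a*f)*(g+n*f)"
      by (rule dvd_add[OF dvd_add[OF dvd_diff[OF t1 t2] t3] t4])
    then show ?thesis by (simp only: key_iden)
  qed
  have eqR: "a*e*((a-e)*(d-h) - (b-f)*(c-g)) + (a-e)^2 - n*(a*f-b*e)^2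
     = a*e*((a-e)*(d-h) - (b-f)*(c-g)) + ((a-e)^2 - n*(a*f-b*e)^2)" by simp
  have aeD: "p dvd a*e*((a-e)*(d-h) - (b-f)*(c-g))" using D by (rule dvd_mult)
  have R2: "p dvd ((a-e)^2 - n*(a*f-b*e)^2)"
    using R unfolding eqR using dvd_add_right_iff[OF aeD] by simp
  show False
  proof (cases "p dvd (a*f - b*e)")
    case True
    have eq2: "(a-e)^2 = ((a-e)^2 - n*(a*f-b*e)^2) + n*(a*f-b*e)*(a*f-b*e)"
      by (simp add: power2_eq_square)
    have "p dvd n*(a*f-b*e)*(a*f-b*e)" using True by (rule dvd_mult)
    then have "p dvd ((a-e)^2 - n*(a*f-b*e)^2) + n*(a*f-b*e)*(a*f-b*e)" by (rule dvd_add[OF R2])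
    then have "p dvd (a-e)^2" by (simp only: eq2[symmetric])
    then have "p dvd (a-e)" by (simp add: prime_dvd_power_iff[OF p])
    then have ae: "a = e" by (rule range_eq[OF X1(3) Y1(3)])
    then have "a*f - b*e = a*(f-b)" by (simp add: algebra_simps)
    then have "p dvd a*(f - b)" using True by simp
    then have "p dvd (f - b)" using na prime_dvd_mult_iff[OF p] by simp
    then have "f = b" by (rule range_eq[OF Y1(4) X1(4)])
    then show False using S_eq[OF p X Y] ae ne by simp
  next
    case False
    then obtain w' where w': "p dvd ((a*f-b*e)*w' - 1)" using inv_ex[OF p] by blast
    define w where "w = a*f-b*e"
    have "((a-e)*w')^2 - n = w'^2*((a-e)^2 - n*w^2) + n*((w*w' - 1)*(w*w'+1))"
      by (simp add: algebra_simps power2_eq_square)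
    moreover have "p dvd w'^2*((a-e)^2 - n*w^2) + n*((w*w' - 1)*(w*w'+1))"
    proof (rule dvd_add)
      show "p dvd w'^2*((a-e)^2 - n*w^2)" using R2 unfolding w_def by (rule dvd_mult)
      have "p dvd (w*w' - 1)*(w*w'+1)" using w' unfolding w_def by (rule dvd_mult2)
      then show "p dvd n*((w*w' - 1)*(w*w'+1))" by (rule dvd_mult)
    qed
    ultimately have "p dvd ((a-e)*w')^2 - n" by simp
    then show False using nsq by blast
  qed
qed

lemma S_card:
  fixes p n :: int
  assumes p: "prime p"
  shows "card (Sset p n) = nat (p*(p-1))"
proof -
  have p0: "p > 0" using prime_gt_0_int[OF p] .
  let ?f = "\<lambda>(a::int,b::int,c::int,d::int). (a,b)"
  have "bij_betw ?f (Sset p n) ({1..p-1} \<times> {0..p-1})"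
  proof (rule bij_betw_imageI)
    show "inj_on ?f (Sset p n)"
      unfolding inj_on_def using S_eq[OF p] by auto
    show "?f ` Sset p n = {1..p-1} \<times> {0..p-1}"
    proof
      show "?f ` Sset p n \<subseteq> {1..p-1} \<times> {0..p-1}"
        by (auto simp: Sset_def SL2_def)
      show "{1..p-1} \<times> {0..p-1} \<subseteq> ?f ` Sset p n"
      proof safe
        fix a b :: int assume a: "a \<in> {1..p-1}" and b: "b \<in> {0..p-1}"
        have na: "\<not> p dvd a"
        proof
          assume "p dvd a" then have "a = 0" using range_eq[of a p 0] a p0 by auto
          then show False using a by simp
        qed
        obtain a' where a': "p dvd (a*a' - 1)" using inv_ex[OF p na] by blast
        define c where "c = (-n*b) mod p"
        define d where "d = ((1 + b*c)*a') mod p"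
        have "p dvd (d - (1 + b*c)*a')" unfolding d_def
          by (simp add: mod_eq_dvd_iff[symmetric])
        then have "p dvd (a*(d - (1 + b*c)*a') + (1+b*c)*(a*a' - 1))"
          using a' by (intro dvd_add dvd_mult dvd_mult2)
        moreover have "a*(d - (1 + b*c)*a') + (1+b*c)*(a*a' - 1) = a*d - b*c - 1"
          by (simp add: algebra_simps)
        ultimately have "p dvd (a*d - b*c - 1)" by simp
        then have "(a,b,c,d) \<in> Sset p n" using a b p0
          unfolding Sset_def SL2_dvd c_def d_def by auto
        then show "(a,b) \<in> ?f ` Sset p n" by force
      qed
    qed
  qed
  then have "card (Sset p n) = card ({1..p-1} \<times> {0..p-1})" by (rule bij_betw_same_card)
  also have "\<dots> = nat (p-1) * nat p" by (simp add: card_cartesian_product)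
  also have "\<dots> = nat (p*(p-1))" using p0 by (simp add: nat_mult_distrib)
  finally show ?thesis .
qed


lemma fin_cliques: assumes "p > 0" shows "finite {S. is_clique p S}"
proof -
  have "SL2 p \<subseteq> {0..p-1} \<times> {0..p-1} \<times> {0..p-1} \<times> {0..p-1}" by (auto simp: SL2_def)
  then have "finite (SL2 p)" by (rule finite_subset) auto
  moreover have "{S. is_clique p S} \<subseteq> Pow (SL2 p)" by (auto simp: is_clique_def)
  ultimately show ?thesis by (meson finite_Pow_iff finite_subset)
qed

lemma clique_ge: assumes "p > 0" "is_clique p S" shows "card S \<le> clique_number p"
  unfolding clique_number_def using fin_cliques[OF assms(1)] assms(2) by (intro Max_ge) auto

theorem mainTheorem3:
  fixes p :: int
  assumes "prime p"
  shows "clique_number p \<ge> nat (p * (p - 1))"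
proof (cases "p = 2")
  case True
  let ?S = "{(1,0,0,1), (1,1,1,0)} :: mat2 set"
  have "is_clique 2 ?S" unfolding is_clique_def
  proof (intro conjI ballI impI)
    show "?S \<subseteq> SL2 2" by (auto simp: SL2_def)
  next
    fix x y assume X0: "x \<in> ?S" and Y0: "y \<in> ?S" and ne0: "x \<noteq> y"
    obtain a b c d where xd: "x = (a,b,c,d)" by (cases x) auto
    obtain e f g h where yd: "y = (e,f,g,h)" by (cases y) auto
    have X: "(a,b,c,d) \<in> ?S" and Y: "(e,f,g,h) \<in> ?S" and ne: "(a,b,c,d) \<noteq> (e,f,g,h)"
      using X0 Y0 ne0 xd yd by auto
    have s: "(a,b,c,d) \<in> SL2 2" "(e,f,g,h) \<in> SL2 2" using X Y by (auto simp: SL2_def)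
    show "cay_adj 2 x y" unfolding xd yd
      by (rule adj_crit[OF _ s]) (use X Y ne in auto)
  qed
  then have "card ?S \<le> clique_number 2" by (intro clique_ge) auto
  then show ?thesis using True by simp
next
  case False
  obtain n where nsq: "\<forall>x. \<not> p dvd (x^2 - n)" using nonsq_ex[OF assms False] by blast
  have p0: "p > 0" using prime_gt_0_int[OF assms] .
  have "is_clique p (Sset p n)" unfolding is_clique_def
  proof (intro conjI ballI impI)
    show "Sset p n \<subseteq> SL2 p" by (auto simp: Sset_def)
  next
    fix x y assume X0: "x \<in> Sset p n" and Y0: "y \<in> Sset p n" and ne0: "x \<noteq> y"
    obtain a b c d where xd: "x = (a,b,c,d)" by (cases x) auto
    obtain e f g h where yd: "y = (e,f,g,h)" by (cases y) auto
    have X: "(a,b,c,d) \<in> Sset p n" and Y: "(e,f,g,h) \<in> Sset p n" and ne: "(a,b,c,d) \<noteq> (e,f,g,h)"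
      using X0 Y0 ne0 xd yd by auto
    have s: "(a,b,c,d) \<in> SL2 p" "(e,f,g,h) \<in> SL2 p" using X Y by (auto simp: Sset_def)
    show "cay_adj p x y" unfolding xd yd
      by (rule adj_crit[OF p0 s S_adj[OF assms nsq X Y ne]])
  qed
  then have "card (Sset p n) \<le> clique_number p" by (intro clique_ge p0)
  then show ?thesis using S_card[OF assms] by simp
qed

end
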